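(* Let $G=\langle(123456),(16)(25)(34)\rangle\le S_6$ (the dihedral group of order $12$ acting on the vertices of a hexagon) and $D=\{(4,2),(3^2)\}$. Then $Aut_0(T_{D;G})$ is the trivial group.
   Context: For a partition $\lambda=(\lambda_1\ge\dots\ge\lambda_k>0)$ of $6$, a tabloid of shape $\lambda$ is a sequence $A=(A_1,\dots,A_k)$ of pairwise disjoint subsets of $\{1,\dots,6\}$ with $|A_i|=\lambda_i$; $T_\lambda$ is their set. $S_6$ acts by $\zeta A=(\zeta(A_1),\dots,\zeta(A_k))$. Tabloids are partially ordered by $A\le B$ iff $A_1\cup\dots\cup A_i\subseteq B_1\cup\dots\cup B_i$ for all $i\ge1$ (missing rows empty). $T_{\lambda;G}$ is the set of $G$-orbits in $T_\lambda$ and $T_{D;G}=\bigcup_{\mu\in D}T_{\mu;G}$, ordered by $a\le b$ iff there are $A\in a$, $B\in b$ with $A\le B$. $Aut_0(T_{D;G})$ is the group of bijections $\alpha$ of $T_{D;G}$ with $\alpha(a)\le\alpha(b)\iff a\le b$ and $\alpha(T_{\mu;G})=T_{\mu;G}$ for every $\mu\in D$. *)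

theory Defs
  imports "HOL-Algebra.Sym_Groups" "HOL-Algebra.Generated_Groups"
begin

definition tabloids :: "nat list \<Rightarrow> nat set list set" where
  "tabloids lam = {A. length A = length lam
      \<and> (\<forall>i<length A. A ! i \<subseteq> {1..6} \<and> card (A ! i) = lam ! i)
      \<and> (\<forall>i<length A. \<forall>j<length A. i \<noteq> j \<longrightarrow> A ! i \<inter> A ! j = {})}"

definition act :: "(nat \<Rightarrow> nat) \<Rightarrow> nat set list \<Rightarrow> nat set list" where
  "act z A = map (\<lambda>X. z ` X) A"

definition tab_le :: "nat set list \<Rightarrow> nat set list \<Rightarrow> bool" where
  "tab_le A B \<longleftrightarrow> (\<forall>i\<ge>1. \<Union> (set (take i A)) \<subseteq> \<Union> (set (take i B)))"

definition orbit :: "(nat \<Rightarrow> nat) set \<Rightarrow> nat set list \<Rightarrow> nat set list set" where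
  "orbit G A = {act z A | z. z \<in> G}"

definition orbits :: "nat list \<Rightarrow> (nat \<Rightarrow> nat) set \<Rightarrow> nat set list set set" where
  "orbits lam G = orbit G ` tabloids lam"

definition orbitsD :: "nat list set \<Rightarrow> (nat \<Rightarrow> nat) set \<Rightarrow> nat set list set set" where
  "orbitsD D G = (\<Union>mu\<in>D. orbits mu G)"

definition orb_le :: "nat set list set \<Rightarrow> nat set list set \<Rightarrow> bool" where
  "orb_le a b \<longleftrightarrow> (\<exists>A\<in>a. \<exists>B\<in>b. tab_le A B)"

definition Aut0 :: "nat list set \<Rightarrow> (nat \<Rightarrow> nat) set
    \<Rightarrow> (nat set list set \<Rightarrow> nat set list set) set" where
  "Aut0 D G = {\<alpha>. \<alpha> \<in> extensional (orbitsD D G)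
      \<and> bij_betw \<alpha> (orbitsD D G) (orbitsD D G)
      \<and> (\<forall>a\<in>orbitsD D G. \<forall>b\<in>orbitsD D G. orb_le (\<alpha> a) (\<alpha> b) \<longleftrightarrow> orb_le a b)
      \<and> (\<forall>mu\<in>D. \<alpha> ` orbits mu G = orbits mu G)}"

definition hex_rot :: "nat \<Rightarrow> nat" where
  "hex_rot x = (if 1 \<le> x \<and> x \<le> 5 then x + 1 else if x = 6 then 1 else x)"

definition hex_refl :: "nat \<Rightarrow> nat" where
  "hex_refl x = (if 1 \<le> x \<and> x \<le> 6 then 7 - x else x)"

definition hexG :: "(nat \<Rightarrow> nat) set" where
  "hexG = generate (sym_group 6) {hex_rot, hex_refl}"

end

theory Submission
  imports Defs
begin

definition pf :: "nat \<Rightarrow> nat \<Rightarrow> nat \<Rightarrow> nat \<Rightarrow> nat \<Rightarrow> nat \<Rightarrow> nat \<Rightarrow> nat" where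
  "pf a b c d e f x = (if x = 1 then a else if x = 2 then b else if x = 3 then c else
     if x = 4 then d else if x = 5 then e else if x = 6 then f else x)"

lemma pf_simps [simp]: "pf a b c d e f 1 = a" "pf a b c d e f 2 = b" "pf a b c d e f 3 = c"
  "pf a b c d e f 4 = d" "pf a b c d e f 5 = e" "pf a b c d e f 6 = f" "pf a b c d e f (Suc 0) = a"
  by (simp_all add: pf_def)

lemma pf_eq: "(pf a1 a2 a3 a4 a5 a6 = pf b1 b2 b3 b4 b5 b6) \<longleftrightarrow>
   (a1 = b1 \<and> a2 = b2 \<and> a3 = b3 \<and> a4 = b4 \<and> a5 = b5 \<and> a6 = b6)"
proof
  assume h: "pf a1 a2 a3 a4 a5 a6 = pf b1 b2 b3 b4 b5 b6"
  show "a1 = b1 \<and> a2 = b2 \<and> a3 = b3 \<and> a4 = b4 \<and> a5 = b5 \<and> a6 = b6"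
    using fun_cong[OF h, of 1] fun_cong[OF h, of 2] fun_cong[OF h, of 3]
      fun_cong[OF h, of 4] fun_cong[OF h, of 5] fun_cong[OF h, of 6] by simp
qed simp

lemma pf_comp: "pf a1 a2 a3 a4 a5 a6 \<circ> pf b1 b2 b3 b4 b5 b6 =
  pf (pf a1 a2 a3 a4 a5 a6 b1) (pf a1 a2 a3 a4 a5 a6 b2) (pf a1 a2 a3 a4 a5 a6 b3)
     (pf a1 a2 a3 a4 a5 a6 b4) (pf a1 a2 a3 a4 a5 a6 b5) (pf a1 a2 a3 a4 a5 a6 b6)"
  by (rule ext) (simp add: pf_def)

definition HH :: "(nat \<Rightarrow> nat) set" where
  "HH = {pf 1 2 3 4 5 6, pf 2 3 4 5 6 1, pf 6 5 4 3 2 1, pf 3 4 5 6 1 2, pf 5 4 3 2 1 6,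
         pf 1 6 5 4 3 2, pf 4 5 6 1 2 3, pf 4 3 2 1 6 5, pf 2 1 6 5 4 3, pf 6 1 2 3 4 5,
         pf 5 6 1 2 3 4, pf 3 2 1 6 5 4}"

lemma id_pf: "id = pf 1 2 3 4 5 6"
  by (rule ext) (simp add: pf_def)

lemma rot_pf: "hex_rot = pf 2 3 4 5 6 1"
proof (rule ext)
  fix x :: nat
  show "hex_rot x = pf 2 3 4 5 6 1 x"
    by (cases "x \<le> 6") (auto simp: hex_rot_def pf_def)
qed

lemma refl_pf: "hex_refl = pf 6 5 4 3 2 1"
proof (rule ext)
  fix x :: nat
  show "hex_refl x = pf 6 5 4 3 2 1 x"
    by (cases "x \<le> 6") (auto simp: hex_refl_def pf_def)
qed

lemma HH_comp: "g \<in> HH \<Longrightarrow> h \<in> HH \<Longrightarrow> g \<circ> h \<in> HH"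
  unfolding HH_def by (elim insertE emptyE; hypsubst; simp only: pf_comp pf_simps insert_iff pf_eq; simp)

lemma HH_inv: "g \<in> HH \<Longrightarrow> \<exists>h\<in>HH. h \<circ> g = id"
  unfolding HH_def id_pf by (elim insertE emptyE; hypsubst; simp only: pf_comp pf_simps bex_simps pf_eq; simp)

lemma inv_rot: "inv' hex_rot = pf 6 1 2 3 4 5"
  unfolding rot_pf by (rule inv_unique_comp) (simp_all add: pf_comp id_pf)

lemma inv_refl: "inv' hex_refl = pf 6 5 4 3 2 1"
  unfolding refl_pf by (rule inv_unique_comp) (simp_all add: pf_comp id_pf)

lemma rot_perm: "hex_rot permutes {1..6}"
proof (rule bij_imp_permutes)
  show "bij_betw hex_rot {1..6} {1..6}"
    unfolding bij_betw_def inj_on_def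
  proof (intro conjI ballI impI equalityI subsetI)
    fix x assume "x \<in> {1..6::nat}"
    then show "x \<in> hex_rot ` {1..6}"
      by (intro image_eqI[of _ _ "if x = 1 then 6 else x - 1"]) (auto simp: hex_rot_def)
  qed (auto simp: hex_rot_def split: if_splits)
qed (auto simp: hex_rot_def)

lemma refl_perm: "hex_refl permutes {1..6}"
proof (rule bij_imp_permutes)
  show "bij_betw hex_refl {1..6} {1..6}"
    unfolding bij_betw_def inj_on_def
  proof (intro conjI ballI impI equalityI subsetI)
    fix x assume "x \<in> {1..6::nat}"
    then show "x \<in> hex_refl ` {1..6}"
      by (intro image_eqI[of _ _ "7 - x"]) (auto simp: hex_refl_def)
  qed (auto simp: hex_refl_def)
qed (auto simp: hex_refl_def)

lemma hexG_eq: "hexG = HH"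
proof
  show "hexG \<subseteq> HH"
  proof
    fix x assume "x \<in> hexG"
    then show "x \<in> HH" unfolding hexG_def
    proof (induction rule: generate.induct)
      case one
      then show ?case by (simp add: sym_group_def HH_def id_pf)
    next
      case (incl h)
      then show ?case by (auto simp: HH_def rot_pf refl_pf)
    next
      case (inv h)
      then have "h \<in> carrier (sym_group 6)" using rot_perm refl_perm
        by (auto simp: sym_group_def)
      then have "inv\<^bsub>sym_group 6\<^esub> h = inv' h" by simp
      then show ?case using inv by (auto simp: inv_rot inv_refl HH_def)
    next
      case (eng h1 h2)
      have "h1 \<otimes>\<^bsub>sym_group 6\<^esub> h2 = h1 \<circ> h2" by (simp add: sym_group_def)
      then show ?case using HH_comp[OF eng.IH, unfolded comp_def] by (simp add: sym_group_def)
    qed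
  qed
next
  let ?g = "generate (sym_group 6) {hex_rot, hex_refl}"
  have m: "a \<in> ?g \<Longrightarrow> b \<in> ?g \<Longrightarrow> a \<circ> b \<in> ?g" for a b
    using generate.eng[of a "sym_group 6" _ b] by (simp add: sym_group_def)
  have r: "pf 2 3 4 5 6 1 \<in> ?g" unfolding rot_pf[symmetric] by (rule generate.incl) simp
  have s: "pf 6 5 4 3 2 1 \<in> ?g" unfolding refl_pf[symmetric] by (rule generate.incl) simp
  have e: "pf 1 2 3 4 5 6 \<in> ?g" using generate.one[of "sym_group 6"] id_pf by (simp add: sym_group_def)
  have r2: "pf 3 4 5 6 1 2 \<in> ?g" using m[OF r r] by (simp add: pf_comp)
  have r3: "pf 4 5 6 1 2 3 \<in> ?g" using m[OF r r2] by (simp add: pf_comp)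
  have r4: "pf 5 6 1 2 3 4 \<in> ?g" using m[OF r r3] by (simp add: pf_comp)
  have r5: "pf 6 1 2 3 4 5 \<in> ?g" using m[OF r r4] by (simp add: pf_comp)
  have s1: "pf 1 6 5 4 3 2 \<in> ?g" using m[OF r s] by (simp add: pf_comp)
  have s2: "pf 2 1 6 5 4 3 \<in> ?g" using m[OF r s1] by (simp add: pf_comp)
  have s3: "pf 3 2 1 6 5 4 \<in> ?g" using m[OF r s2] by (simp add: pf_comp)
  have s4: "pf 4 3 2 1 6 5 \<in> ?g" using m[OF r s3] by (simp add: pf_comp)
  have s5: "pf 5 4 3 2 1 6 \<in> ?g" using m[OF r s4] by (simp add: pf_comp)
  show "HH \<subseteq> hexG" unfolding hexG_def HH_def
    using e r s r2 r3 r4 r5 s1 s2 s3 s4 s5 by simp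
qed

lemma act_comp: "act (g \<circ> h) A = act g (act h A)"
  by (simp add: act_def image_comp)

lemma act_id: "act id A = A"
  by (simp add: act_def)

lemma HH_id: "id \<in> HH"
  by (simp add: HH_def id_pf)

lemma HH_inj: "g \<in> HH \<Longrightarrow> inj g"
  using HH_inv by (metis inj_on_id inj_on_imageI2)

lemma orbit_act: assumes g: "g \<in> HH" shows "orbit HH (act g A) = orbit HH A"
proof
  show "orbit HH (act g A) \<subseteq> orbit HH A"
    unfolding orbit_def using HH_comp[OF _ g] by (auto simp: act_comp[symmetric])
next
  obtain h where h: "h \<in> HH" "h \<circ> g = id" using HH_inv[OF g] by blast
  show "orbit HH A \<subseteq> orbit HH (act g A)"
  proof
    fix x assume "x \<in> orbit HH A"
    then obtain z where z: "z \<in> HH" "x = act z A" unfolding orbit_def by blast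
    have "x = act (z \<circ> h) (act g A)"
      using z h by (simp add: act_comp[symmetric] comp_assoc)
    then show "x \<in> orbit HH (act g A)" unfolding orbit_def using HH_comp[OF z(1) h(1)] by blast
  qed
qed

lemma orbit_eqI: "g \<in> HH \<Longrightarrow> T = act g A \<Longrightarrow> orbit HH T = orbit HH A"
  using orbit_act by simp

lemma union_act: "\<Union> (set (take i (act g A))) = g ` \<Union> (set (take i A))"
  by (simp add: act_def take_map image_Union)

lemma tab_le_act: "inj g \<Longrightarrow> tab_le (act g A) (act g B) \<longleftrightarrow> tab_le A B"
  unfolding tab_le_def union_act by (simp add: inj_image_subset_iff)

lemma orb_le_orbit: "orb_le (orbit HH A) (orbit HH B) \<longleftrightarrow> (\<exists>g\<in>HH. tab_le A (act g B))"
proof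
  assume "orb_le (orbit HH A) (orbit HH B)"
  then obtain z w where zw: "z \<in> HH" "w \<in> HH" "tab_le (act z A) (act w B)"
    unfolding orb_le_def orbit_def by blast
  obtain h where h: "h \<in> HH" "h \<circ> z = id" using HH_inv[OF zw(1)] by blast
  have "tab_le (act h (act z A)) (act h (act w B))"
    using tab_le_act[OF HH_inj[OF h(1)]] zw(3) by simp
  then have "tab_le A (act (h \<circ> w) B)"
    by (simp add: act_comp[symmetric] h(2) act_id)
  then show "\<exists>g\<in>HH. tab_le A (act g B)" using HH_comp[OF h(1) zw(2)] by blast
next
  assume "\<exists>g\<in>HH. tab_le A (act g B)"
  then obtain g where "g \<in> HH" "tab_le A (act g B)" by blast
  then show "orb_le (orbit HH A) (orbit HH B)"
    unfolding orb_le_def orbit_def using HH_id act_id by (metis (mono_tags, lifting) mem_Collect_eq)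
qed

lemma tab_le2: "tab_le [A1, A2] [B1, B2] \<longleftrightarrow> A1 \<subseteq> B1 \<and> A1 \<union> A2 \<subseteq> B1 \<union> B2"
proof
  assume "tab_le [A1, A2] [B1, B2]"
  then have a: "\<forall>i\<ge>1. \<Union> (set (take i [A1, A2])) \<subseteq> \<Union> (set (take i [B1, B2]))"
    unfolding tab_le_def .
  have "\<Union> (set (take 1 [A1, A2])) \<subseteq> \<Union> (set (take 1 [B1, B2]))"
    using a[rule_format, of 1] by simp
  moreover have "\<Union> (set (take 2 [A1, A2])) \<subseteq> \<Union> (set (take 2 [B1, B2]))"
    using a[rule_format, of 2] by simp
  ultimately show "A1 \<subseteq> B1 \<and> A1 \<union> A2 \<subseteq> B1 \<union> B2" by (simp add: numeral_2_eq_2)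
next
  assume a: "A1 \<subseteq> B1 \<and> A1 \<union> A2 \<subseteq> B1 \<union> B2"
  show "tab_le [A1, A2] [B1, B2]" unfolding tab_le_def
  proof (intro allI impI)
    fix i :: nat assume "i \<ge> 1"
    then consider "i = 1" | "i \<ge> 2" by linarith
    then show "\<Union> (set (take i [A1, A2])) \<subseteq> \<Union> (set (take i [B1, B2]))"
    proof cases
      case 1 then show ?thesis using a by simp
    next
      case 2 then have "take i [A1, A2] = [A1, A2]" "take i [B1, B2] = [B1, B2]" by auto
      then show ?thesis using a by simp
    qed
  qed
qed

lemma S6: "{1..6::nat} = {1,2,3,4,5,6}"
  by auto

lemma tab_shape:
  assumes T: "T \<in> tabloids [p, q]" and pq: "p + q = 6"
  shows "\<exists>X. T = [X, {1,2,3,4,5,6} - X] \<and> X \<subseteq> {1,2,3,4,5,6} \<and> card X = p"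
proof -
  from T have len: "length T = 2" unfolding tabloids_def by simp
  then obtain X Y where XY: "T = [X, Y]"
    by (metis (no_types, lifting) One_nat_def Suc_length_conv length_0_conv numeral_2_eq_2)
  from T XY have h1: "\<forall>i<2. [X,Y] ! i \<subseteq> {1..6} \<and> card ([X,Y] ! i) = [p,q] ! i"
    and h2: "\<forall>i<2. \<forall>j<2. i \<noteq> j \<longrightarrow> [X,Y] ! i \<inter> [X,Y] ! j = {}"
    unfolding tabloids_def by auto
  have X: "X \<subseteq> {1..6}" "card X = p" using h1[rule_format, of 0] by auto
  have Y: "Y \<subseteq> {1..6}" "card Y = q" using h1[rule_format, of 1] by auto
  have d: "X \<inter> Y = {}" using h2[rule_format, of 0 1] by auto
  have fin: "finite X" "finite Y" using X Y finite_subset by auto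
  have "card (X \<union> Y) = 6" using card_Un_disjoint[OF fin d] X Y pq by simp
  then have "X \<union> Y = {1..6}" using X Y by (intro card_subset_eq) auto
  then have "Y = {1..6} - X" using d by blast
  then show ?thesis using XY X S6 by auto
qed

lemma decomp: "X \<subseteq> {1,2,3,4,5,6::nat} \<Longrightarrow> X = (if 1 \<in> X then {1} else {}) \<union> (if 2 \<in> X then {2} else {})
  \<union> (if 3 \<in> X then {3} else {}) \<union> (if 4 \<in> X then {4} else {}) \<union> (if 5 \<in> X then {5} else {})
  \<union> (if 6 \<in> X then {6} else {})"
  by auto

lemma decomp2: "X \<subseteq> {1,2,3,4,5,6::nat} \<Longrightarrow> X = (if 1 \<in> X then {1} else {}) \<union> ((if 2 \<in> X then {2} else {})
  \<union> ((if 3 \<in> X then {3} else {}) \<union> ((if 4 \<in> X then {4} else {}) \<union> ((if 5 \<in> X then {5} else {})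
  \<union> (if 6 \<in> X then {6} else {})))))"
  by auto
definition O0 :: "nat set list set" where "O0 = orbit HH [{1, 2, 3, 4}, {5, 6}]"

definition O1 :: "nat set list set" where "O1 = orbit HH [{1, 2, 3, 5}, {4, 6}]"

definition O2 :: "nat set list set" where "O2 = orbit HH [{1, 2, 4, 5}, {3, 6}]"

definition O3 :: "nat set list set" where "O3 = orbit HH [{1, 2, 3}, {4, 5, 6}]"

definition O4 :: "nat set list set" where "O4 = orbit HH [{1, 2, 4}, {3, 5, 6}]"

definition O5 :: "nat set list set" where "O5 = orbit HH [{1, 3, 5}, {2, 4, 6}]"

lemma enum4_bool: "card ((if b1 then {1::nat} else {}) \<union> ((if b2 then {2::nat} else {}) \<union> ((if b3 then {3::nat} else {}) \<union> ((if b4 then {4::nat} else {}) \<union> ((if b5 then {5::nat} else {}) \<union> ((if b6 then {6::nat} else {}))))))) = 4 \<Longrightarrow> ((if b1 then {1::nat} else {}) \<union> ((if b2 then {2::nat} else {}) \<union> ((if b3 then {3::nat} else {}) \<union> ((if b4 then {4::nat} else {}) \<union> ((if b5 then {5::nat} else {}) \<union> ((if b6 then {6::nat} else {}))))))) \<in> {{1, 2, 3, 4}, {1, 2, 3, 5}, {1, 2, 3, 6}, {1, 2, 4, 5}, {1, 2, 4, 6}, {1, 2, 5, 6}, {1, 3, 4, 5}, {1, 3, 4, 6}, {1, 3, 5, 6}, {1, 4, 5, 6}, {2, 3, 4, 5}, {2, 3, 4, 6}, {2, 3, 5, 6}, {2, 4, 5, 6}, {3, 4, 5, 6}}"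
  by (cases b1; cases b2; cases b3; cases b4; cases b5; cases b6; simp only: if_True if_False Un_empty_left Un_insert_left insert_iff simp_thms; simp)

lemma enum4: fixes X :: "nat set" assumes "X \<subseteq> {1, 2, 3, 4, 5, 6}" "card X = 4" shows "X \<in> {{1, 2, 3, 4}, {1, 2, 3, 5}, {1, 2, 3, 6}, {1, 2, 4, 5}, {1, 2, 4, 6}, {1, 2, 5, 6}, {1, 3, 4, 5}, {1, 3, 4, 6}, {1, 3, 5, 6}, {1, 4, 5, 6}, {2, 3, 4, 5}, {2, 3, 4, 6}, {2, 3, 5, 6}, {2, 4, 5, 6}, {3, 4, 5, 6}}"
proof -
  obtain b1 b2 b3 b4 b5 b6 where e: "X = (if b1 then {1::nat} else {}) \<union> ((if b2 then {2::nat} else {}) \<union> ((if b3 then {3::nat} else {}) \<union> ((if b4 then {4::nat} else {}) \<union> ((if b5 then {5::nat} else {}) \<union> ((if b6 then {6::nat} else {}))))))"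
    by (rule that[OF decomp2[OF assms(1)]])
  show ?thesis unfolding e by (rule enum4_bool[OF assms(2)[unfolded e]])
qed

lemma of4_0: "orbit HH [{1, 2, 3, 4}, {1, 2, 3, 4, 5, 6} - {1, 2, 3, 4}] = O0"
  unfolding O0_def by (rule orbit_eqI[of "pf 1 2 3 4 5 6"]) (auto simp: HH_def pf_eq act_def)

lemma of4_1: "orbit HH [{1, 2, 3, 5}, {1, 2, 3, 4, 5, 6} - {1, 2, 3, 5}] = O1"
  unfolding O1_def by (rule orbit_eqI[of "pf 1 2 3 4 5 6"]) (auto simp: HH_def pf_eq act_def)

lemma of4_2: "orbit HH [{1, 2, 3, 6}, {1, 2, 3, 4, 5, 6} - {1, 2, 3, 6}] = O0"
  unfolding O0_def by (rule orbit_eqI[of "pf 6 1 2 3 4 5"]) (auto simp: HH_def pf_eq act_def)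

lemma of4_3: "orbit HH [{1, 2, 4, 5}, {1, 2, 3, 4, 5, 6} - {1, 2, 4, 5}] = O2"
  unfolding O2_def by (rule orbit_eqI[of "pf 1 2 3 4 5 6"]) (auto simp: HH_def pf_eq act_def)

lemma of4_4: "orbit HH [{1, 2, 4, 6}, {1, 2, 3, 4, 5, 6} - {1, 2, 4, 6}] = O1"
  unfolding O1_def by (rule orbit_eqI[of "pf 2 1 6 5 4 3"]) (auto simp: HH_def pf_eq act_def)

lemma of4_5: "orbit HH [{1, 2, 5, 6}, {1, 2, 3, 4, 5, 6} - {1, 2, 5, 6}] = O0"
  unfolding O0_def by (rule orbit_eqI[of "pf 2 1 6 5 4 3"]) (auto simp: HH_def pf_eq act_def)

lemma of4_6: "orbit HH [{1, 3, 4, 5}, {1, 2, 3, 4, 5, 6} - {1, 3, 4, 5}] = O1"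
  unfolding O1_def by (rule orbit_eqI[of "pf 3 4 5 6 1 2"]) (auto simp: HH_def pf_eq act_def)

lemma of4_7: "orbit HH [{1, 3, 4, 6}, {1, 2, 3, 4, 5, 6} - {1, 3, 4, 6}] = O2"
  unfolding O2_def by (rule orbit_eqI[of "pf 3 4 5 6 1 2"]) (auto simp: HH_def pf_eq act_def)

lemma of4_8: "orbit HH [{1, 3, 5, 6}, {1, 2, 3, 4, 5, 6} - {1, 3, 5, 6}] = O1"
  unfolding O1_def by (rule orbit_eqI[of "pf 1 6 5 4 3 2"]) (auto simp: HH_def pf_eq act_def)

lemma of4_9: "orbit HH [{1, 4, 5, 6}, {1, 2, 3, 4, 5, 6} - {1, 4, 5, 6}] = O0"
  unfolding O0_def by (rule orbit_eqI[of "pf 1 6 5 4 3 2"]) (auto simp: HH_def pf_eq act_def)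

lemma of4_10: "orbit HH [{2, 3, 4, 5}, {1, 2, 3, 4, 5, 6} - {2, 3, 4, 5}] = O0"
  unfolding O0_def by (rule orbit_eqI[of "pf 2 3 4 5 6 1"]) (auto simp: HH_def pf_eq act_def)

lemma of4_11: "orbit HH [{2, 3, 4, 6}, {1, 2, 3, 4, 5, 6} - {2, 3, 4, 6}] = O1"
  unfolding O1_def by (rule orbit_eqI[of "pf 2 3 4 5 6 1"]) (auto simp: HH_def pf_eq act_def)

lemma of4_12: "orbit HH [{2, 3, 5, 6}, {1, 2, 3, 4, 5, 6} - {2, 3, 5, 6}] = O2"
  unfolding O2_def by (rule orbit_eqI[of "pf 2 3 4 5 6 1"]) (auto simp: HH_def pf_eq act_def)

lemma of4_13: "orbit HH [{2, 4, 5, 6}, {1, 2, 3, 4, 5, 6} - {2, 4, 5, 6}] = O1"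
  unfolding O1_def by (rule orbit_eqI[of "pf 6 5 4 3 2 1"]) (auto simp: HH_def pf_eq act_def)

lemma of4_14: "orbit HH [{3, 4, 5, 6}, {1, 2, 3, 4, 5, 6} - {3, 4, 5, 6}] = O0"
  unfolding O0_def by (rule orbit_eqI[of "pf 6 5 4 3 2 1"]) (auto simp: HH_def pf_eq act_def)

lemma orbits4: "orbits [4, 2] HH = {O0, O1, O2}"
proof
  show "orbits [4, 2] HH \<subseteq> {O0, O1, O2}"
  proof
    fix a assume "a \<in> orbits [4, 2] HH"
    then obtain T where T: "T \<in> tabloids [4, 2]" "a = orbit HH T" unfolding orbits_def by blast
    obtain X where X: "T = [X, {1, 2, 3, 4, 5, 6} - X]" "X \<subseteq> {1, 2, 3, 4, 5, 6}" "card X = 4"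
      using tab_shape[OF T(1)] by auto
    have "X \<in> {{1, 2, 3, 4}, {1, 2, 3, 5}, {1, 2, 3, 6}, {1, 2, 4, 5}, {1, 2, 4, 6}, {1, 2, 5, 6}, {1, 3, 4, 5}, {1, 3, 4, 6}, {1, 3, 5, 6}, {1, 4, 5, 6}, {2, 3, 4, 5}, {2, 3, 4, 6}, {2, 3, 5, 6}, {2, 4, 5, 6}, {3, 4, 5, 6}}" using enum4[OF X(2,3)] .
    then show "a \<in> {O0, O1, O2}" unfolding T(2) X(1)
      by (elim insertE emptyE; hypsubst; simp only: of4_0 of4_1 of4_2 of4_3 of4_4 of4_5 of4_6 of4_7 of4_8 of4_9 of4_10 of4_11 of4_12 of4_13 of4_14; simp)
  qed
next
  show "{O0, O1, O2} \<subseteq> orbits [4, 2] HH" unfolding orbits_def O0_def O1_def O2_def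
    by (intro insert_subsetI empty_subsetI imageI) (simp_all add: tabloids_def less_Suc_eq numeral_2_eq_2 nth_Cons')
qed

lemma enum3_bool: "card ((if b1 then {1::nat} else {}) \<union> ((if b2 then {2::nat} else {}) \<union> ((if b3 then {3::nat} else {}) \<union> ((if b4 then {4::nat} else {}) \<union> ((if b5 then {5::nat} else {}) \<union> ((if b6 then {6::nat} else {}))))))) = 3 \<Longrightarrow> ((if b1 then {1::nat} else {}) \<union> ((if b2 then {2::nat} else {}) \<union> ((if b3 then {3::nat} else {}) \<union> ((if b4 then {4::nat} else {}) \<union> ((if b5 then {5::nat} else {}) \<union> ((if b6 then {6::nat} else {}))))))) \<in> {{1, 2, 3}, {1, 2, 4}, {1, 2, 5}, {1, 2, 6}, {1, 3, 4}, {1, 3, 5}, {1, 3, 6}, {1, 4, 5}, {1, 4, 6}, {1, 5, 6}, {2, 3, 4}, {2, 3, 5}, {2, 3, 6}, {2, 4, 5}, {2, 4, 6}, {2, 5, 6}, {3, 4, 5}, {3, 4, 6}, {3, 5, 6}, {4, 5, 6}}"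
  by (cases b1; cases b2; cases b3; cases b4; cases b5; cases b6; simp only: if_True if_False Un_empty_left Un_insert_left insert_iff simp_thms; simp)

lemma enum3: fixes X :: "nat set" assumes "X \<subseteq> {1, 2, 3, 4, 5, 6}" "card X = 3" shows "X \<in> {{1, 2, 3}, {1, 2, 4}, {1, 2, 5}, {1, 2, 6}, {1, 3, 4}, {1, 3, 5}, {1, 3, 6}, {1, 4, 5}, {1, 4, 6}, {1, 5, 6}, {2, 3, 4}, {2, 3, 5}, {2, 3, 6}, {2, 4, 5}, {2, 4, 6}, {2, 5, 6}, {3, 4, 5}, {3, 4, 6}, {3, 5, 6}, {4, 5, 6}}"
proof -
  obtain b1 b2 b3 b4 b5 b6 where e: "X = (if b1 then {1::nat} else {}) \<union> ((if b2 then {2::nat} else {}) \<union> ((if b3 then {3::nat} else {}) \<union> ((if b4 then {4::nat} else {}) \<union> ((if b5 then {5::nat} else {}) \<union> ((if b6 then {6::nat} else {}))))))"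
    by (rule that[OF decomp2[OF assms(1)]])
  show ?thesis unfolding e by (rule enum3_bool[OF assms(2)[unfolded e]])
qed

lemma of3_0: "orbit HH [{1, 2, 3}, {1, 2, 3, 4, 5, 6} - {1, 2, 3}] = O3"
  unfolding O3_def by (rule orbit_eqI[of "pf 1 2 3 4 5 6"]) (auto simp: HH_def pf_eq act_def)

lemma of3_1: "orbit HH [{1, 2, 4}, {1, 2, 3, 4, 5, 6} - {1, 2, 4}] = O4"
  unfolding O4_def by (rule orbit_eqI[of "pf 1 2 3 4 5 6"]) (auto simp: HH_def pf_eq act_def)

lemma of3_2: "orbit HH [{1, 2, 5}, {1, 2, 3, 4, 5, 6} - {1, 2, 5}] = O4"
  unfolding O4_def by (rule orbit_eqI[of "pf 2 1 6 5 4 3"]) (auto simp: HH_def pf_eq act_def)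

lemma of3_3: "orbit HH [{1, 2, 6}, {1, 2, 3, 4, 5, 6} - {1, 2, 6}] = O3"
  unfolding O3_def by (rule orbit_eqI[of "pf 2 1 6 5 4 3"]) (auto simp: HH_def pf_eq act_def)

lemma of3_4: "orbit HH [{1, 3, 4}, {1, 2, 3, 4, 5, 6} - {1, 3, 4}] = O4"
  unfolding O4_def by (rule orbit_eqI[of "pf 4 3 2 1 6 5"]) (auto simp: HH_def pf_eq act_def)

lemma of3_5: "orbit HH [{1, 3, 5}, {1, 2, 3, 4, 5, 6} - {1, 3, 5}] = O5"
  unfolding O5_def by (rule orbit_eqI[of "pf 1 2 3 4 5 6"]) (auto simp: HH_def pf_eq act_def)

lemma of3_6: "orbit HH [{1, 3, 6}, {1, 2, 3, 4, 5, 6} - {1, 3, 6}] = O4"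
  unfolding O4_def by (rule orbit_eqI[of "pf 6 1 2 3 4 5"]) (auto simp: HH_def pf_eq act_def)

lemma of3_7: "orbit HH [{1, 4, 5}, {1, 2, 3, 4, 5, 6} - {1, 4, 5}] = O4"
  unfolding O4_def by (rule orbit_eqI[of "pf 4 5 6 1 2 3"]) (auto simp: HH_def pf_eq act_def)

lemma of3_8: "orbit HH [{1, 4, 6}, {1, 2, 3, 4, 5, 6} - {1, 4, 6}] = O4"
  unfolding O4_def by (rule orbit_eqI[of "pf 1 6 5 4 3 2"]) (auto simp: HH_def pf_eq act_def)

lemma of3_9: "orbit HH [{1, 5, 6}, {1, 2, 3, 4, 5, 6} - {1, 5, 6}] = O3"
  unfolding O3_def by (rule orbit_eqI[of "pf 1 6 5 4 3 2"]) (auto simp: HH_def pf_eq act_def)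

lemma of3_10: "orbit HH [{2, 3, 4}, {1, 2, 3, 4, 5, 6} - {2, 3, 4}] = O3"
  unfolding O3_def by (rule orbit_eqI[of "pf 2 3 4 5 6 1"]) (auto simp: HH_def pf_eq act_def)

lemma of3_11: "orbit HH [{2, 3, 5}, {1, 2, 3, 4, 5, 6} - {2, 3, 5}] = O4"
  unfolding O4_def by (rule orbit_eqI[of "pf 2 3 4 5 6 1"]) (auto simp: HH_def pf_eq act_def)

lemma of3_12: "orbit HH [{2, 3, 6}, {1, 2, 3, 4, 5, 6} - {2, 3, 6}] = O4"
  unfolding O4_def by (rule orbit_eqI[of "pf 3 2 1 6 5 4"]) (auto simp: HH_def pf_eq act_def)

lemma of3_13: "orbit HH [{2, 4, 5}, {1, 2, 3, 4, 5, 6} - {2, 4, 5}] = O4"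
  unfolding O4_def by (rule orbit_eqI[of "pf 5 4 3 2 1 6"]) (auto simp: HH_def pf_eq act_def)

lemma of3_14: "orbit HH [{2, 4, 6}, {1, 2, 3, 4, 5, 6} - {2, 4, 6}] = O5"
  unfolding O5_def by (rule orbit_eqI[of "pf 2 3 4 5 6 1"]) (auto simp: HH_def pf_eq act_def)

lemma of3_15: "orbit HH [{2, 5, 6}, {1, 2, 3, 4, 5, 6} - {2, 5, 6}] = O4"
  unfolding O4_def by (rule orbit_eqI[of "pf 5 6 1 2 3 4"]) (auto simp: HH_def pf_eq act_def)

lemma of3_16: "orbit HH [{3, 4, 5}, {1, 2, 3, 4, 5, 6} - {3, 4, 5}] = O3"
  unfolding O3_def by (rule orbit_eqI[of "pf 3 4 5 6 1 2"]) (auto simp: HH_def pf_eq act_def)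

lemma of3_17: "orbit HH [{3, 4, 6}, {1, 2, 3, 4, 5, 6} - {3, 4, 6}] = O4"
  unfolding O4_def by (rule orbit_eqI[of "pf 3 4 5 6 1 2"]) (auto simp: HH_def pf_eq act_def)

lemma of3_18: "orbit HH [{3, 5, 6}, {1, 2, 3, 4, 5, 6} - {3, 5, 6}] = O4"
  unfolding O4_def by (rule orbit_eqI[of "pf 6 5 4 3 2 1"]) (auto simp: HH_def pf_eq act_def)

lemma of3_19: "orbit HH [{4, 5, 6}, {1, 2, 3, 4, 5, 6} - {4, 5, 6}] = O3"
  unfolding O3_def by (rule orbit_eqI[of "pf 6 5 4 3 2 1"]) (auto simp: HH_def pf_eq act_def)

lemma orbits3: "orbits [3, 3] HH = {O3, O4, O5}"
proof
  show "orbits [3, 3] HH \<subseteq> {O3, O4, O5}"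
  proof
    fix a assume "a \<in> orbits [3, 3] HH"
    then obtain T where T: "T \<in> tabloids [3, 3]" "a = orbit HH T" unfolding orbits_def by blast
    obtain X where X: "T = [X, {1, 2, 3, 4, 5, 6} - X]" "X \<subseteq> {1, 2, 3, 4, 5, 6}" "card X = 3"
      using tab_shape[OF T(1)] by auto
    have "X \<in> {{1, 2, 3}, {1, 2, 4}, {1, 2, 5}, {1, 2, 6}, {1, 3, 4}, {1, 3, 5}, {1, 3, 6}, {1, 4, 5}, {1, 4, 6}, {1, 5, 6}, {2, 3, 4}, {2, 3, 5}, {2, 3, 6}, {2, 4, 5}, {2, 4, 6}, {2, 5, 6}, {3, 4, 5}, {3, 4, 6}, {3, 5, 6}, {4, 5, 6}}" using enum3[OF X(2,3)] .
    then show "a \<in> {O3, O4, O5}" unfolding T(2) X(1)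
      by (elim insertE emptyE; hypsubst; simp only: of3_0 of3_1 of3_2 of3_3 of3_4 of3_5 of3_6 of3_7 of3_8 of3_9 of3_10 of3_11 of3_12 of3_13 of3_14 of3_15 of3_16 of3_17 of3_18 of3_19; simp)
  qed
next
  show "{O3, O4, O5} \<subseteq> orbits [3, 3] HH" unfolding orbits_def O3_def O4_def O5_def
    by (intro insert_subsetI empty_subsetI imageI) (simp_all add: tabloids_def less_Suc_eq numeral_2_eq_2 nth_Cons')
qed

lemma t00: "orb_le O0 O0"
  unfolding O0_def O0_def orb_le_orbit unfolding HH_def by (simp add: act_def tab_le2)

lemma t01: "\<not> orb_le O0 O1"
  unfolding O0_def O1_def orb_le_orbit unfolding HH_def by (simp add: act_def tab_le2)

lemma t02: "\<not> orb_le O0 O2"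
  unfolding O0_def O2_def orb_le_orbit unfolding HH_def by (simp add: act_def tab_le2)

lemma t03: "\<not> orb_le O0 O3"
  unfolding O0_def O3_def orb_le_orbit unfolding HH_def by (simp add: act_def tab_le2)

lemma t04: "\<not> orb_le O0 O4"
  unfolding O0_def O4_def orb_le_orbit unfolding HH_def by (simp add: act_def tab_le2)

lemma t05: "\<not> orb_le O0 O5"
  unfolding O0_def O5_def orb_le_orbit unfolding HH_def by (simp add: act_def tab_le2)

lemma t10: "\<not> orb_le O1 O0"
  unfolding O1_def O0_def orb_le_orbit unfolding HH_def by (simp add: act_def tab_le2)

lemma t11: "orb_le O1 O1"
  unfolding O1_def O1_def orb_le_orbit unfolding HH_def by (simp add: act_def tab_le2)

lemma t12: "\<not> orb_le O1 O2"
  unfolding O1_def O2_def orb_le_orbit unfolding HH_def by (simp add: act_def tab_le2)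

lemma t13: "\<not> orb_le O1 O3"
  unfolding O1_def O3_def orb_le_orbit unfolding HH_def by (simp add: act_def tab_le2)

lemma t14: "\<not> orb_le O1 O4"
  unfolding O1_def O4_def orb_le_orbit unfolding HH_def by (simp add: act_def tab_le2)

lemma t15: "\<not> orb_le O1 O5"
  unfolding O1_def O5_def orb_le_orbit unfolding HH_def by (simp add: act_def tab_le2)

lemma t20: "\<not> orb_le O2 O0"
  unfolding O2_def O0_def orb_le_orbit unfolding HH_def by (simp add: act_def tab_le2)

lemma t21: "\<not> orb_le O2 O1"
  unfolding O2_def O1_def orb_le_orbit unfolding HH_def by (simp add: act_def tab_le2)

lemma t22: "orb_le O2 O2"
  unfolding O2_def O2_def orb_le_orbit unfolding HH_def by (simp add: act_def tab_le2)

lemma t23: "\<not> orb_le O2 O3"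
  unfolding O2_def O3_def orb_le_orbit unfolding HH_def by (simp add: act_def tab_le2)

lemma t24: "\<not> orb_le O2 O4"
  unfolding O2_def O4_def orb_le_orbit unfolding HH_def by (simp add: act_def tab_le2)

lemma t25: "\<not> orb_le O2 O5"
  unfolding O2_def O5_def orb_le_orbit unfolding HH_def by (simp add: act_def tab_le2)

lemma t30: "orb_le O3 O0"
  unfolding O3_def O0_def orb_le_orbit unfolding HH_def by (simp add: act_def tab_le2)

lemma t31: "orb_le O3 O1"
  unfolding O3_def O1_def orb_le_orbit unfolding HH_def by (simp add: act_def tab_le2)

lemma t32: "\<not> orb_le O3 O2"
  unfolding O3_def O2_def orb_le_orbit unfolding HH_def by (simp add: act_def tab_le2)

lemma t33: "orb_le O3 O3"
  unfolding O3_def O3_def orb_le_orbit unfolding HH_def by (simp add: act_def tab_le2)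

lemma t34: "\<not> orb_le O3 O4"
  unfolding O3_def O4_def orb_le_orbit unfolding HH_def by (simp add: act_def tab_le2)

lemma t35: "\<not> orb_le O3 O5"
  unfolding O3_def O5_def orb_le_orbit unfolding HH_def by (simp add: act_def tab_le2)

lemma t40: "orb_le O4 O0"
  unfolding O4_def O0_def orb_le_orbit unfolding HH_def by (simp add: act_def tab_le2)

lemma t41: "orb_le O4 O1"
  unfolding O4_def O1_def orb_le_orbit unfolding HH_def by (simp add: act_def tab_le2)

lemma t42: "orb_le O4 O2"
  unfolding O4_def O2_def orb_le_orbit unfolding HH_def by (simp add: act_def tab_le2)

lemma t43: "\<not> orb_le O4 O3"
  unfolding O4_def O3_def orb_le_orbit unfolding HH_def by (simp add: act_def tab_le2)

lemma t44: "orb_le O4 O4"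
  unfolding O4_def O4_def orb_le_orbit unfolding HH_def by (simp add: act_def tab_le2)

lemma t45: "\<not> orb_le O4 O5"
  unfolding O4_def O5_def orb_le_orbit unfolding HH_def by (simp add: act_def tab_le2)

lemma t50: "\<not> orb_le O5 O0"
  unfolding O5_def O0_def orb_le_orbit unfolding HH_def by (simp add: act_def tab_le2)

lemma t51: "orb_le O5 O1"
  unfolding O5_def O1_def orb_le_orbit unfolding HH_def by (simp add: act_def tab_le2)

lemma t52: "\<not> orb_le O5 O2"
  unfolding O5_def O2_def orb_le_orbit unfolding HH_def by (simp add: act_def tab_le2)

lemma t53: "\<not> orb_le O5 O3"
  unfolding O5_def O3_def orb_le_orbit unfolding HH_def by (simp add: act_def tab_le2)

lemma t54: "\<not> orb_le O5 O4"
  unfolding O5_def O4_def orb_le_orbit unfolding HH_def by (simp add: act_def tab_le2)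

lemma t55: "orb_le O5 O5"
  unfolding O5_def O5_def orb_le_orbit unfolding HH_def by (simp add: act_def tab_le2)

lemmas tbl = t00 t01 t02 t03 t04 t05 t10 t11 t12 t13 t14 t15 t20 t21 t22 t23 t24 t25 t30 t31 t32 t33 t34 t35 t40 t41 t42 t43 t44 t45 t50 t51 t52 t53 t54 t55

lemma d01: "O0 \<noteq> O1"
proof
  assume "O0 = O1"
  then have "orb_le O0 O0 = orb_le O0 O1" by simp
  then show False by (simp add: tbl)
qed

lemma d02: "O0 \<noteq> O2"
proof
  assume "O0 = O2"
  then have "orb_le O0 O0 = orb_le O0 O2" by simp
  then show False by (simp add: tbl)
qed

lemma d03: "O0 \<noteq> O3"
proof
  assume "O0 = O3"
  then have "orb_le O0 O0 = orb_le O0 O3" by simp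
  then show False by (simp add: tbl)
qed

lemma d04: "O0 \<noteq> O4"
proof
  assume "O0 = O4"
  then have "orb_le O0 O0 = orb_le O0 O4" by simp
  then show False by (simp add: tbl)
qed

lemma d05: "O0 \<noteq> O5"
proof
  assume "O0 = O5"
  then have "orb_le O0 O0 = orb_le O0 O5" by simp
  then show False by (simp add: tbl)
qed

lemma d12: "O1 \<noteq> O2"
proof
  assume "O1 = O2"
  then have "orb_le O1 O1 = orb_le O1 O2" by simp
  then show False by (simp add: tbl)
qed

lemma d13: "O1 \<noteq> O3"
proof
  assume "O1 = O3"
  then have "orb_le O1 O0 = orb_le O3 O0" by simp
  then show False by (simp add: tbl)
qed

lemma d14: "O1 \<noteq> O4"
proof
  assume "O1 = O4"
  then have "orb_le O1 O0 = orb_le O4 O0" by simp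
  then show False by (simp add: tbl)
qed

lemma d15: "O1 \<noteq> O5"
proof
  assume "O1 = O5"
  then have "orb_le O1 O1 = orb_le O1 O5" by simp
  then show False by (simp add: tbl)
qed

lemma d23: "O2 \<noteq> O3"
proof
  assume "O2 = O3"
  then have "orb_le O2 O0 = orb_le O3 O0" by simp
  then show False by (simp add: tbl)
qed

lemma d24: "O2 \<noteq> O4"
proof
  assume "O2 = O4"
  then have "orb_le O2 O0 = orb_le O4 O0" by simp
  then show False by (simp add: tbl)
qed

lemma d25: "O2 \<noteq> O5"
proof
  assume "O2 = O5"
  then have "orb_le O2 O1 = orb_le O5 O1" by simp
  then show False by (simp add: tbl)
qed

lemma d34: "O3 \<noteq> O4"
proof
  assume "O3 = O4"
  then have "orb_le O3 O2 = orb_le O4 O2" by simp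
  then show False by (simp add: tbl)
qed

lemma d35: "O3 \<noteq> O5"
proof
  assume "O3 = O5"
  then have "orb_le O3 O0 = orb_le O5 O0" by simp
  then show False by (simp add: tbl)
qed

lemma d45: "O4 \<noteq> O5"
proof
  assume "O4 = O5"
  then have "orb_le O4 O0 = orb_le O5 O0" by simp
  then show False by (simp add: tbl)
qed

lemmas dst = d01 d02 d03 d04 d05 d12 d13 d14 d15 d23 d24 d25 d34 d35 d45

lemma orbD: "orbitsD {[4, 2], [3, 3]} HH = {O0, O1, O2, O3, O4, O5}"
  unfolding orbitsD_def using orbits4 orbits3 by auto

theorem theorem10p2p1:
  shows "Aut0 {[4, 2], [3, 3]} hexG = {(\<lambda>a\<in>orbitsD {[4, 2], [3, 3]} hexG. a)}"
  unfolding hexG_eq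
proof (intro equalityI subsetI)
  fix f assume "f \<in> Aut0 {[4, 2], [3, 3]} HH"
  then have ext: "f \<in> extensional (orbitsD {[4, 2], [3, 3]} HH)"
    and bij: "bij_betw f (orbitsD {[4, 2], [3, 3]} HH) (orbitsD {[4, 2], [3, 3]} HH)"
    and ord: "\<And>a b. a \<in> orbitsD {[4, 2], [3, 3]} HH \<Longrightarrow> b \<in> orbitsD {[4, 2], [3, 3]} HH \<Longrightarrow>
       orb_le (f a) (f b) = orb_le a b"
    and sh: "\<And>mu. mu \<in> {[4, 2], [3, 3]} \<Longrightarrow> f ` orbits mu HH = orbits mu HH"
    unfolding Aut0_def by auto
  have inj: "inj_on f {O0, O1, O2, O3, O4, O5}" using bij orbD by (simp add: bij_betw_def)
  have s1: "f ` {O0, O1, O2} = {O0, O1, O2}" using sh[of "[4, 2]"] orbits4 by simp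
  have s2: "f ` {O3, O4, O5} = {O3, O4, O5}" using sh[of "[3, 3]"] orbits3 by simp
  have m0: "f O0 \<in> {O0, O1, O2}" and m1: "f O1 \<in> {O0, O1, O2}" and m2: "f O2 \<in> {O0, O1, O2}"
    using s1 by blast+
  have m3: "f O3 \<in> {O3, O4, O5}" and m4: "f O4 \<in> {O3, O4, O5}" and m5: "f O5 \<in> {O3, O4, O5}"
    using s2 by blast+
  have i01: "f O0 \<noteq> f O1" "f O0 \<noteq> f O2" "f O1 \<noteq> f O2"
    "f O3 \<noteq> f O4" "f O3 \<noteq> f O5" "f O4 \<noteq> f O5"
    using inj dst by (auto simp: inj_on_def)
  have o: "\<And>a b. a \<in> {O0, O1, O2, O3, O4, O5} \<Longrightarrow> b \<in> {O0, O1, O2, O3, O4, O5} \<Longrightarrow>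
       orb_le (f a) (f b) = orb_le a b" using ord orbD by simp
  have o1: "orb_le (f O4) (f O0)" "orb_le (f O4) (f O1)" "orb_le (f O4) (f O2)"
    "orb_le (f O3) (f O0)" "orb_le (f O3) (f O1)" "\<not> orb_le (f O3) (f O2)"
    "\<not> orb_le (f O5) (f O0)" "orb_le (f O5) (f O1)" "\<not> orb_le (f O5) (f O2)"
    using o[of O4 O0] o[of O4 O1] o[of O4 O2] o[of O3 O0] o[of O3 O1] o[of O3 O2]
      o[of O5 O0] o[of O5 O1] o[of O5 O2] by (simp_all add: tbl)
  have fx: "f O0 = O0 \<and> f O1 = O1 \<and> f O2 = O2 \<and> f O3 = O3 \<and> f O4 = O4 \<and> f O5 = O5"
  proof -
    have h0: "f O0 = O0 \<or> f O1 = O0 \<or> f O2 = O0" using s1 by blast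
    have h1: "f O0 = O1 \<or> f O1 = O1 \<or> f O2 = O1" using s1 by blast
    have h2: "f O0 = O2 \<or> f O1 = O2 \<or> f O2 = O2" using s1 by blast
    have a4: "f O4 = O4" using m4 h2 o1(1-3) by (auto simp: tbl)
    have a5: "f O5 = O5"
    proof -
      have "f O5 \<noteq> O4" using a4 i01(6) by simp
      moreover have "f O5 \<noteq> O3"
      proof
        assume e: "f O5 = O3"
        have "f O0 = O2" using m0 o1(7) e by (auto simp: tbl)
        moreover have "f O2 = O2" using m2 o1(9) e by (auto simp: tbl)
        ultimately show False using i01(2) by simp
      qed
      ultimately show ?thesis using m5 by blast
    qed
    have a3: "f O3 = O3" using m3 a4 a5 i01(4,5) by auto
    have a2: "f O2 = O2" using m2 o1(6) a3 by (auto simp: tbl)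
    have a0: "f O0 = O0" using m0 o1(7) a5 a2 i01(2) by (auto simp: tbl)
    have a1: "f O1 = O1" using h1 a0 a2 dst by auto
    show ?thesis using a0 a1 a2 a3 a4 a5 by blast
  qed
  show "f \<in> {\<lambda>a\<in>orbitsD {[4, 2], [3, 3]} HH. a}"
  proof -
    have "f = (\<lambda>a\<in>orbitsD {[4, 2], [3, 3]} HH. a)"
    proof
      fix a show "f a = (\<lambda>a\<in>orbitsD {[4, 2], [3, 3]} HH. a) a"
      proof (cases "a \<in> orbitsD {[4, 2], [3, 3]} HH")
        case True then show ?thesis using fx orbD by auto
      next
        case False then show ?thesis using ext by (simp add: extensional_def)
      qed
    qed
    then show ?thesis by simp
  qed
next
  fix f assume "f \<in> {\<lambda>a\<in>orbitsD {[4, 2], [3, 3]} HH. a}"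
  then have f: "f = (\<lambda>a\<in>orbitsD {[4, 2], [3, 3]} HH. a)" by simp
  have b: "bij_betw f (orbitsD {[4, 2], [3, 3]} HH) (orbitsD {[4, 2], [3, 3]} HH)"
    unfolding f by (rule bij_betw_cong[THEN iffD1, OF _ bij_betw_id]) simp
  have s: "f ` orbits mu HH = orbits mu HH" if "mu \<in> {[4, 2], [3, 3]}" for mu
  proof -
    have "orbits mu HH \<subseteq> orbitsD {[4, 2], [3, 3]} HH" using that unfolding orbitsD_def by blast
    then show ?thesis unfolding f by (auto simp: image_def)
  qed
  show "f \<in> Aut0 {[4, 2], [3, 3]} HH"
    unfolding Aut0_def using b s by (auto simp: f)
qed

end
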